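(* Let $f:\mathcal D_n^+\to\mathcal D_n^+$ be contracting for the stable semi-metric, i.e. there exists $\lambda\in(0,1)$ with $d_s(f(\Delta),f(\Delta'))\le\lambda\, d_s(\Delta,\Delta')$ for all $\Delta,\Delta'\in\mathcal D_n^+$. Then $f$ admits a unique fixed point $\Delta^*\in\mathcal D_n^+$, $\Delta^*=f(\Delta^* )$.
   Context: $\mathcal D_n^+$ is the set of $n\times n$ diagonal matrices with positive diagonal entries. The stable semi-metric is $d_s(\Delta,\Delta')=\left\|\frac{\Delta-\Delta'}{\sqrt{\Delta\Delta'}}\right\|=\max_i\frac{|\Delta_i-\Delta'_i|}{\sqrt{\Delta_i\Delta'_i}}$. *)

theory Defs
  imports "HOL-Analysis.Analysis"
begin

text \<open>Positive diagonal n x n matrices, represented by their diagonal vectors.\<close>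
definition Dpos :: "(real ^ 'n) set" where
  "Dpos = {d. \<forall>i. d $ i > 0}"

text \<open>Stable semi-metric: max over i of |d_i - d'_i| / sqrt(d_i d'_i) (operator norm of a diagonal matrix).\<close>
definition d_s :: "real ^ 'n \<Rightarrow> real ^ 'n \<Rightarrow> real" where
  "d_s d d' = Max (range (\<lambda>i. \<bar>d $ i - d' $ i\<bar> / sqrt (d $ i * d' $ i)))"

end

theory Submission
  imports Defs
begin

definition tm :: "real ^ 'n \<Rightarrow> real ^ 'n \<Rightarrow> 'n \<Rightarrow> real" where
  "tm d d' i = \<bar>d $ i - d' $ i\<bar> / sqrt (d $ i * d' $ i)"

lemma tm_nonneg: assumes "d \<in> Dpos" "d' \<in> Dpos" shows "tm d d' i \<ge> 0"
proof -
  have "0 < d $ i * d' $ i" using assms by (simp add: Dpos_def)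
  thus ?thesis by (simp add: tm_def)
qed

lemma tm_le: "tm d d' i \<le> d_s d d'"
  unfolding d_s_def tm_def by (rule Max_ge) auto

lemma ds_le_sum: assumes "d \<in> Dpos" "d' \<in> Dpos" shows "d_s d d' \<le> (\<Sum>i\<in>UNIV. tm d d' i)"
proof -
  have "d_s d d' \<in> range (\<lambda>i. tm d d' i)"
    unfolding d_s_def tm_def by (rule Max_in) auto
  then obtain j where "d_s d d' = tm d d' j" by auto
  also have "\<dots> \<le> (\<Sum>i\<in>UNIV. tm d d' i)"
    by (rule member_le_sum) (use assms in \<open>auto simp: tm_nonneg\<close>)
  finally show ?thesis .
qed

lemma ds_nonneg: "d \<in> Dpos \<Longrightarrow> d' \<in> Dpos \<Longrightarrow> d_s d d' \<ge> 0"
  using tm_le[of d d' undefined] tm_nonneg[of d d' undefined] by linarith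

lemma ln_aux: fixes p q :: real assumes "q > 0" "p \<ge> q"
  shows "ln (p/q) \<le> (p*p - q*q) / (p*q)"
proof -
  have "ln (p/q) \<le> p/q - 1" using ln_le_minus_one[of "p/q"] assms by simp
  also have "\<dots> \<le> p/q - q/p" using assms by simp
  also have "\<dots> = (p*p - q*q) / (p*q)" using assms by (simp add: diff_divide_distrib)
  finally show ?thesis .
qed

lemma ln_diff_le: assumes "a > 0" "b > 0"
  shows "\<bar>ln a - ln b\<bar> \<le> 2 * (\<bar>a - b\<bar> / sqrt (a * b))"
proof -
  have key: "ln a - ln b \<le> 2 * ((a - b) / sqrt (a * b))" if "a > 0" "b > 0" "a \<ge> b" for a b :: real
  proof -
    define p where "p = sqrt a"
    define q where "q = sqrt b"
    have pq: "p > 0" "q > 0" "p \<ge> q" using that by (auto simp: p_def q_def)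
    have a: "a = p*p" and b: "b = q*q" using that by (auto simp: p_def q_def)
    have "ln a - ln b = 2 * ln (p/q)" using pq
      by (simp add: a b ln_mult ln_div)
    also have "\<dots> \<le> 2 * ((p*p - q*q) / (p*q))" using ln_aux[OF pq(2,3)] by linarith
    also have "(p*p - q*q) / (p*q) = (a - b) / sqrt (a * b)"
      using pq by (simp add: a b real_sqrt_mult)
    finally show ?thesis .
  qed
  show ?thesis
  proof (cases "a \<ge> b")
    case True
    moreover have "ln b \<le> ln a" using True assms by simp
    ultimately show ?thesis using key[OF assms True] by simp
  next
    case False
    then show ?thesis using key[of b a] assms by (simp add: mult.commute abs_minus_commute)
  qed
qed

theorem theorem2:
  fixes f :: "real ^ 'n \<Rightarrow> real ^ 'n"
  assumes maps: "\<forall>d\<in>Dpos. f d \<in> Dpos"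
    and contr: "\<exists>c. 0 < c \<and> c < 1 \<and>
                 (\<forall>d\<in>Dpos. \<forall>d'\<in>Dpos. d_s (f d) (f d') \<le> c * d_s d d')"
  shows "\<exists>!d. d \<in> Dpos \<and> f d = d"
proof -
  obtain c where c: "0 < c" "c < 1" and C: "\<And>d d'. d \<in> Dpos \<Longrightarrow> d' \<in> Dpos \<Longrightarrow> d_s (f d) (f d') \<le> c * d_s d d'"
    using contr by auto
  have uniq: "d = d'" if "d \<in> Dpos" "d' \<in> Dpos" "f d = d" "f d' = d'" for d d'
  proof -
    have "d_s d d' \<le> c * d_s d d'" using C[OF that(1,2)] that(3,4) by simp
    hence "(1 - c) * d_s d d' \<le> 0" by (simp add: algebra_simps)
    hence "d_s d d' = 0" using c ds_nonneg[OF that(1,2)] mult_pos_pos[of "1-c" "d_s d d'"] by linarith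
    hence "tm d d' i = 0" for i using tm_le[of d d' i] tm_nonneg[OF that(1,2), of i] by simp
    have "d $ i = d' $ i" for i
    proof -
      have p: "d $ i > 0" "d' $ i > 0" using that(1,2) by (auto simp: Dpos_def)
      have "tm d d' i = 0" by fact
      thus ?thesis using p by (simp add: tm_def)
    qed
    thus ?thesis by (simp add: vec_eq_iff)
  qed
  define x where "x k = (f ^^ k) (\<chi> i. 1)" for k
  have xD: "x k \<in> Dpos" for k
  proof (induction k)
    case 0 show ?case by (simp add: x_def Dpos_def)
  next
    case (Suc k) then show ?case using maps by (simp add: x_def)
  qed
  have xS: "x (Suc k) = f (x k)" for k by (simp add: x_def)
  define D where "D = d_s (x 1) (x 0)"
  have step: "d_s (x (Suc k)) (x k) \<le> c ^ k * D" for k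
  proof (induction k)
    case 0 then show ?case by (simp add: D_def)
  next
    case (Suc k)
    have "d_s (x (Suc (Suc k))) (x (Suc k)) \<le> c * d_s (x (Suc k)) (x k)"
      using C[OF xD[of "Suc k"] xD[of k]] by (simp only: xS)
    also have "\<dots> \<le> c * (c ^ k * D)" using Suc c by (simp add: mult_left_mono)
    finally show ?case by simp
  qed
  have lim: "\<exists>l. (\<lambda>n. ln (x n $ i)) \<longlonglongrightarrow> l" for i
  proof -
    define g where "g k = ln (x (Suc k) $ i) - ln (x k $ i)" for k
    have gb: "norm (g k) \<le> 2 * D * c ^ k" for k
    proof -
      have "norm (g k) \<le> 2 * tm (x (Suc k)) (x k) i"
        unfolding g_def tm_def real_norm_def
        by (rule ln_diff_le) (use xD in \<open>auto simp: Dpos_def\<close>)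
      also have "\<dots> \<le> 2 * (c ^ k * D)" using tm_le[of "x (Suc k)" "x k" i] step[of k] by linarith
      finally show ?thesis by (simp add: mult_ac)
    qed
    have "summable (\<lambda>k. 2 * D * c ^ k)"
      using c by (intro summable_mult summable_geometric) auto
    hence sg: "summable g" by (rule summable_comparison_test'[OF _ gb])
    have "(\<lambda>n. \<Sum>k<n. g k) \<longlonglongrightarrow> suminf g" using summable_LIMSEQ[OF sg] .
    moreover have "(\<Sum>k<n. g k) = ln (x n $ i) - ln (x 0 $ i)" for n
      unfolding g_def by (rule sum_lessThan_telescope)
    ultimately have "(\<lambda>n. ln (x n $ i) - ln (x 0 $ i)) \<longlonglongrightarrow> suminf g" by simp
    hence "(\<lambda>n. ln (x n $ i) - ln (x 0 $ i) + ln (x 0 $ i)) \<longlonglongrightarrow> suminf g + ln (x 0 $ i)"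
      by (intro tendsto_intros)
    thus ?thesis by auto
  qed
  hence "\<forall>i. \<exists>l. (\<lambda>n. ln (x n $ i)) \<longlonglongrightarrow> l" by blast
  hence "\<exists>l. \<forall>i. (\<lambda>n. ln (x n $ i)) \<longlonglongrightarrow> l i" by (rule choice)
  then obtain l where l: "\<And>i. (\<lambda>n. ln (x n $ i)) \<longlonglongrightarrow> l i" by blast
  define xs where "xs = (\<chi> i. exp (l i))"
  have xsD: "xs \<in> Dpos" by (simp add: xs_def Dpos_def)
  have xpos: "x n $ i > 0" for n i using xD by (simp add: Dpos_def)
  have conv: "(\<lambda>n. x n $ i) \<longlonglongrightarrow> xs $ i" for i
  proof -
    have "(\<lambda>n. exp (ln (x n $ i))) \<longlonglongrightarrow> exp (l i)" by (intro tendsto_intros l)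
    thus ?thesis using xpos by (simp add: xs_def)
  qed
  have tm0: "(\<lambda>n. tm (x n) xs i) \<longlonglongrightarrow> 0" for i
  proof -
    have "(\<lambda>n. \<bar>x n $ i - xs $ i\<bar> / sqrt (x n $ i * xs $ i)) \<longlonglongrightarrow> \<bar>xs $ i - xs $ i\<bar> / sqrt (xs $ i * xs $ i)"
    proof (rule tendsto_divide)
      show "(\<lambda>n. \<bar>x n $ i - xs $ i\<bar>) \<longlonglongrightarrow> \<bar>xs $ i - xs $ i\<bar>"
        by (intro tendsto_rabs tendsto_diff conv tendsto_const)
      show "(\<lambda>n. sqrt (x n $ i * xs $ i)) \<longlonglongrightarrow> sqrt (xs $ i * xs $ i)"
        by (intro tendsto_real_sqrt tendsto_mult conv tendsto_const)
      have "xs $ i > 0" using xsD by (simp add: Dpos_def)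
      thus "sqrt (xs $ i * xs $ i) \<noteq> 0" by simp
    qed
    thus ?thesis by (simp add: tm_def)
  qed
  have sum0: "(\<lambda>n. c * (\<Sum>i\<in>UNIV. tm (x n) xs i)) \<longlonglongrightarrow> 0"
  proof -
    have "(\<lambda>n. \<Sum>i\<in>UNIV. tm (x n) xs i) \<longlonglongrightarrow> 0"
      by (rule tendsto_null_sum) (rule tm0)
    thus ?thesis by (rule tendsto_mult_right_zero)
  qed
  have fixpt: "f xs $ i = xs $ i" for i
  proof -
    have t1: "(\<lambda>n. tm (x (Suc n)) (f xs) i) \<longlonglongrightarrow> 0"
    proof (rule tendsto_sandwich[OF _ _ tendsto_const sum0])
      show "\<forall>\<^sub>F n in sequentially. 0 \<le> tm (x (Suc n)) (f xs) i" using xD maps xsD by (simp add: tm_nonneg)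
      show "\<forall>\<^sub>F n in sequentially. tm (x (Suc n)) (f xs) i \<le> c * (\<Sum>i\<in>UNIV. tm (x n) xs i)"
      proof (intro always_eventually allI)
        fix n
        have "tm (x (Suc n)) (f xs) i \<le> d_s (f (x n)) (f xs)" using tm_le[of "f (x n)" "f xs" i] xS[of n] by simp
        also have "\<dots> \<le> c * d_s (x n) xs" using C[OF xD xsD] .
        also have "\<dots> \<le> c * (\<Sum>i\<in>UNIV. tm (x n) xs i)" using c ds_le_sum[OF xD xsD] by (simp add: mult_left_mono)
        finally show "tm (x (Suc n)) (f xs) i \<le> c * (\<Sum>i\<in>UNIV. tm (x n) xs i)" .
      qed
    qed
    have fpos: "f xs $ i > 0" using maps xsD by (simp add: Dpos_def)
    have eq: "\<bar>x (Suc n) $ i - f xs $ i\<bar> = tm (x (Suc n)) (f xs) i * sqrt (x (Suc n) $ i * f xs $ i)" for n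
      using xpos[of "Suc n" i] fpos by (simp add: tm_def)
    have "(\<lambda>n. tm (x (Suc n)) (f xs) i * sqrt (x (Suc n) $ i * f xs $ i)) \<longlonglongrightarrow> 0 * sqrt (xs $ i * f xs $ i)"
      by (intro tendsto_mult t1 tendsto_real_sqrt tendsto_const LIMSEQ_Suc[OF conv])
    hence "(\<lambda>n. \<bar>x (Suc n) $ i - f xs $ i\<bar>) \<longlonglongrightarrow> 0" by (simp add: eq)
    hence "(\<lambda>n. x (Suc n) $ i - f xs $ i) \<longlonglongrightarrow> 0" by (simp add: tendsto_rabs_zero_iff)
    hence "(\<lambda>n. x (Suc n) $ i) \<longlonglongrightarrow> f xs $ i" by (simp add: LIM_zero_iff)
    moreover have "(\<lambda>n. x (Suc n) $ i) \<longlonglongrightarrow> xs $ i" using LIMSEQ_Suc[OF conv] .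
    ultimately show ?thesis by (rule LIMSEQ_unique)
  qed
  have "f xs = xs" by (simp add: vec_eq_iff fixpt)
  thus ?thesis using xsD uniq by blast
qed

end
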